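(* Let $n, r, s, \ell$ be positive integers with $r+s+\ell\le n$, let $S_1\subseteq\cdots\subseteq S_{\ell+1}\subseteq\mathbb{Z}_2^n$ be subspaces with $\dim S_j=r+j-1$, and let $m\ge 1$. For every oracle-aided quantum algorithm making at most $q$ quantum queries, the distinguishing advantage between the following two oracle distributions is at most $O\!\left(\frac{q\cdot\ell\cdot m\cdot s}{\sqrt{2^{\,n-r-s-\ell}}}\right)$: (a) sample $(T_{i,1},\ldots,T_{i,\ell+1})\gets\mathcal{S}_s$ independently for each $i\in[m]$ and give access to $(\mathcal{O}_{T_{i,1}},\ldots,\mathcal{O}_{T_{i,\ell+1}})_{i\in[m]}$; (b) sample a single $(T_1,\ldots,T_{\ell+1})\gets\mathcal{S}_s$ and give access to $m$ copies $(\mathcal{O}_{T_1},\ldots,\mathcal{O}_{T_{\ell+1}})_{i\in[m]}$.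
   Context: All linear algebra is over $\mathbb{Z}_2$. Given the subspaces $S_1\subseteq\cdots\subseteq S_{\ell+1}$, the distribution $\mathcal{S}_s$ over tuples of subspaces is: pick $s$ uniformly random linearly independent vectors $\mathbf{v}_1,\ldots,\mathbf{v}_s\in\mathbb{Z}_2^n$ conditioned on $\mathrm{span}\{\mathbf{v}_1,\ldots,\mathbf{v}_s\}\cap S_{\ell+1}=\{0\}$, and set $T_j:=\mathrm{span}\{S_j,\mathbf{v}_1,\ldots,\mathbf{v}_s\}$ for all $j\in[\ell+1]$. For a subspace $S'\subseteq\mathbb{Z}_2^n$, $\mathcal{O}_{S'}$ is the membership oracle outputting $1$ iff its input lies in $S'$. *)

theory Defs
  imports "HOL-Library.Z2" "HOL-Library.Function_Algebras"
          "HOL-Probability.Probability_Mass_Function"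
begin

definition z2scale :: "bit \<Rightarrow> (nat \<Rightarrow> bit) \<Rightarrow> (nat \<Rightarrow> bit)" where
  "z2scale c v = (\<lambda>i. c * v i)"

global_interpretation z2: vector_space z2scale
  by unfold_locales (auto simp: z2scale_def fun_eq_iff algebra_simps)

definition Z2vecs :: "nat \<Rightarrow> (nat \<Rightarrow> bit) set" where
  "Z2vecs n = {v. \<forall>i\<ge>n. v i = 0}"

text \<open>Support of the uniform choice of (v_1,...,v_s): linearly independent
  (distinct, independent as a set) vectors of Z_2^n whose span meets S_(l+1)
  only in 0.\<close>
definition indep_tuples ::
  "nat \<Rightarrow> (nat \<Rightarrow> (nat \<Rightarrow> bit) set) \<Rightarrow> nat \<Rightarrow> nat \<Rightarrow> (nat \<Rightarrow> bit) list set" where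
  "indep_tuples n S l s = {vs. length vs = s \<and> distinct vs \<and> set vs \<subseteq> Z2vecs n \<and>
      z2.independent (set vs) \<and> z2.span (set vs) \<inter> S (l + 1) = {0}}"

definition Tsp :: "(nat \<Rightarrow> (nat \<Rightarrow> bit) set) \<Rightarrow> (nat \<Rightarrow> bit) list \<Rightarrow> nat \<Rightarrow> (nat \<Rightarrow> bit) set" where
  "Tsp S vs j = z2.span (S j \<union> set vs)"

text \<open>Basis labels: ((i,j), x, b, w): oracle index (i,j) with i < m, 1 <= j <= l+1,
  query input x in Z_2^n, answer bit b, workspace index w < W.\<close>
type_synonym label = "(nat \<times> nat) \<times> (nat \<Rightarrow> bit) \<times> bool \<times> nat"

definition qbasis :: "nat \<Rightarrow> nat \<Rightarrow> nat \<Rightarrow> nat \<Rightarrow> label set" where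
  "qbasis n m l W = {((i,j),x,b,w). i < m \<and> j \<in> {1..l+1} \<and> x \<in> Z2vecs n \<and> w < W}"

definition unitary_on :: "label set \<Rightarrow> (label \<Rightarrow> label \<Rightarrow> complex) \<Rightarrow> bool" where
  "unitary_on B U \<longleftrightarrow> (\<forall>x\<in>B. \<forall>y\<in>B.
      (\<Sum>z\<in>B. cnj (U z x) * U z y) = (if x = y then 1 else 0))"

definition apply_op :: "label set \<Rightarrow> (label \<Rightarrow> label \<Rightarrow> complex) \<Rightarrow> (label \<Rightarrow> complex) \<Rightarrow> (label \<Rightarrow> complex)" where
  "apply_op B U \<psi> = (\<lambda>y. \<Sum>x\<in>B. U y x * \<psi> x)"

definition oracle_op :: "(nat \<times> nat \<Rightarrow> (nat \<Rightarrow> bit) \<Rightarrow> bool) \<Rightarrow> (label \<Rightarrow> complex) \<Rightarrow> (label \<Rightarrow> complex)" where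
  "oracle_op f \<psi> = (\<lambda>(ij, x, b, w). \<psi> (ij, x, b \<noteq> f ij x, w))"

text \<open>Run U_0, O, U_1, O, ..., O, U_q: a list of q+1 unitaries gives q queries.\<close>
fun run :: "label set \<Rightarrow> (nat \<times> nat \<Rightarrow> (nat \<Rightarrow> bit) \<Rightarrow> bool) \<Rightarrow>
    (label \<Rightarrow> label \<Rightarrow> complex) list \<Rightarrow> (label \<Rightarrow> complex) \<Rightarrow> (label \<Rightarrow> complex)" where
  "run B f [] \<psi> = \<psi>"
| "run B f [U] \<psi> = apply_op B U \<psi>"
| "run B f (U # V # Us) \<psi> = run B f (V # Us) (oracle_op f (apply_op B U \<psi>))"

definition init_state :: "label \<Rightarrow> complex" where
  "init_state = (\<lambda>l. if l = ((0,1), 0, False, 0) then 1 else 0)"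

text \<open>Probability that the algorithm outputs 1: measure in the computational
  basis and output the answer bit b.\<close>
definition accept_prob :: "label set \<Rightarrow> (nat \<times> nat \<Rightarrow> (nat \<Rightarrow> bit) \<Rightarrow> bool) \<Rightarrow>
    (label \<Rightarrow> label \<Rightarrow> complex) list \<Rightarrow> real" where
  "accept_prob B f Us =
     (\<Sum>l\<in>B. if fst (snd (snd l)) then (cmod (run B f Us init_state l))\<^sup>2 else 0)"

text \<open>(a) independent samples for each i < m (uniform over m-lists of tuples
  = product of independent uniform samples).\<close>
definition prob_indep :: "nat \<Rightarrow> nat \<Rightarrow> nat \<Rightarrow> nat \<Rightarrow> nat \<Rightarrow> (nat \<Rightarrow> (nat \<Rightarrow> bit) set) \<Rightarrow>
     (label \<Rightarrow> label \<Rightarrow> complex) list \<Rightarrow> real" where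
  "prob_indep n m l s W S Us =
     measure_pmf.expectation
       (pmf_of_set {vss. length vss = m \<and> set vss \<subseteq> indep_tuples n S l s})
       (\<lambda>vss. accept_prob (qbasis n m l W) (\<lambda>(i,j) x. x \<in> Tsp S (vss ! i) j) Us)"

definition prob_copies :: "nat \<Rightarrow> nat \<Rightarrow> nat \<Rightarrow> nat \<Rightarrow> nat \<Rightarrow> (nat \<Rightarrow> (nat \<Rightarrow> bit) set) \<Rightarrow>
     (label \<Rightarrow> label \<Rightarrow> complex) list \<Rightarrow> real" where
  "prob_copies n m l s W S Us =
     measure_pmf.expectation
       (pmf_of_set (indep_tuples n S l s))
       (\<lambda>vs. accept_prob (qbasis n m l W) (\<lambda>(i,j) x. x \<in> Tsp S vs j) Us)"

end

theory Submission
  imports Defs "HOL-Analysis.L2_Norm"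
begin
lemma bit_cases2: "(c::bit) = 0 \<or> c = 1" by (cases c) auto
lemma bit_add_self[simp]: "(c::bit) + c = 0" by (cases c) auto
lemma vec_add_self[simp]: "(v::nat\<Rightarrow>bit) + v = 0" by (simp add: fun_eq_iff)
lemma z2scale_0[simp]: "z2scale 0 v = 0" by (simp add: z2scale_def fun_eq_iff)

lemma Z2vecs_eq: "Z2vecs n = (\<lambda>A i. if i \<in> A then 1 else 0) ` Pow {..<n}"
proof safe
  fix v assume v: "v \<in> Z2vecs n"
  show "v \<in> (\<lambda>A i. if i \<in> A then 1 else 0) ` Pow {..<n}"
  proof (rule image_eqI[of _ _ "{i. i < n \<and> v i = 1}"])
    show "v = (\<lambda>i. if i \<in> {i. i < n \<and> v i = 1} then 1 else 0)"
      using v unfolding Z2vecs_def by (auto simp: fun_eq_iff)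
  qed auto
qed (auto simp: Z2vecs_def)

lemma Z2vecs_card: "card (Z2vecs n) = 2 ^ n" and Z2vecs_finite: "finite (Z2vecs n)"
proof -
  have "inj_on (\<lambda>A i. if i \<in> A then (1::bit) else 0) (Pow {..<n})"
    by (rule inj_onI) (auto simp: fun_eq_iff split: if_splits; metis zero_neq_one)+
  then show "card (Z2vecs n) = 2 ^ n" unfolding Z2vecs_eq
    by (simp add: card_image card_Pow)
  show "finite (Z2vecs n)" unfolding Z2vecs_eq by simp
qed

lemma Z2vecs_subspace: "z2.subspace (Z2vecs n)"
  unfolding z2.subspace_def Z2vecs_def by (auto simp: z2scale_def)

lemma span_card:
  assumes "finite X" shows "finite (z2.span X) \<and> card (z2.span X) \<le> 2 ^ card X"
  using assms
proof (induction X rule: finite_induct)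
  case empty then show ?case by simp
next
  case (insert a X)
  have sub: "z2.span (insert a X) \<subseteq> z2.span X \<union> (\<lambda>y. a + y) ` z2.span X"
  proof
    fix w assume "w \<in> z2.span (insert a X)"
    then obtain k where k: "w - z2scale k a \<in> z2.span X" unfolding z2.span_insert by auto
    show "w \<in> z2.span X \<union> (\<lambda>y. a + y) ` z2.span X"
    proof (cases "k = 0")
      case True then show ?thesis using k by simp
    next
      case False then have "k = 1" using bit_cases2 by blast
      then have "w - a \<in> z2.span X" using k by simp
      moreover have "w = a + (w - a)" by simp
      ultimately show ?thesis by blast
    qed
  qed
  have fin: "finite (z2.span X \<union> (\<lambda>y. a + y) ` z2.span X)" using insert by simp
  have "card (z2.span X \<union> (\<lambda>y. a + y) ` z2.span X) \<le> card (z2.span X) + card ((\<lambda>y. a + y) ` z2.span X)"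
    by (rule card_Un_le)
  also have "\<dots> \<le> 2 * card (z2.span X)" using card_image_le[of "z2.span X" "\<lambda>y. a + y"] insert by simp
  also have "\<dots> \<le> 2 ^ card (insert a X)" using insert by simp
  finally show ?case using sub fin by (meson card_mono finite_subset order_trans)
qed

interpretation bz: vector_space "(*) :: bit \<Rightarrow> bit \<Rightarrow> bit"
  by unfold_locales (auto simp: algebra_simps)

interpretation zb: vector_space_pair z2scale "(*) :: bit \<Rightarrow> bit \<Rightarrow> bit"
  by unfold_locales

lemma functional_exists:
  assumes S: "z2.subspace S" and x: "x \<notin> S" and y: "y \<notin> S"
  shows "\<exists>\<phi>. Vector_Spaces.linear z2scale ((*) :: bit \<Rightarrow> bit \<Rightarrow> bit) \<phi> \<and> (\<forall>v\<in>S. \<phi> v = 0) \<and> \<phi> x = 1 \<and> \<phi> y = 1"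
proof -
  obtain B0 where B0: "B0 \<subseteq> S" "z2.independent B0" "S \<subseteq> z2.span B0" "card B0 = z2.dim S"
    by (rule z2.basis_exists)
  have spanB0: "z2.span B0 = S"
    using B0 S by (meson z2.span_minimal subset_antisym)
  define f0 :: "(nat \<Rightarrow> bit) \<Rightarrow> bit" where "f0 = (\<lambda>v. if v \<in> B0 then 0 else 1)"
  have indx: "z2.independent (insert x B0)"
    using B0 x spanB0 by (simp add: z2.independent_insertI)
  show ?thesis
  proof (cases "y \<in> z2.span (insert x S)")
    case True
    obtain \<phi> where \<phi>: "Vector_Spaces.linear z2scale (*) \<phi>" "\<forall>v\<in>insert x B0. \<phi> v = f0 v"
      using zb.linear_independent_extend[OF indx] by blast
    have zS: "\<forall>v\<in>S. \<phi> v = 0"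
    proof
      fix v assume "v \<in> S" then have "v \<in> z2.span B0" using spanB0 by simp
      then show "\<phi> v = 0" using zb.linear_eq_0_on_span[OF \<phi>(1), of B0 v] \<phi>(2) unfolding f0_def by simp
    qed
    have "x \<notin> B0" using x B0(1) by blast
    then have px: "\<phi> x = 1" using \<phi>(2) unfolding f0_def by simp
    have spS: "z2.span S = S" using S z2.span_eq_iff by blast
    obtain k where k: "y - z2scale k x \<in> S"
      using True unfolding z2.span_insert spS by blast
    have "k \<noteq> 0"
    proof
      assume "k = 0" then have "y \<in> S" using k by simp
      then show False using y by blast
    qed
    then have "k = 1" using bit_cases2 by blast
    then have "\<phi> (y - x) = 0" using zS k by simp
    then have "\<phi> y = 1" using px zb.linear_diff[OF \<phi>(1)] by (simp add: algebra_simps)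
    then show ?thesis using \<phi> zS px by blast
  next
    case False
    have "z2.span (insert x B0) \<subseteq> z2.span (insert x S)"
      using B0 by (intro z2.span_mono) auto
    then have "y \<notin> z2.span (insert x B0)" using False by blast
    then have indy: "z2.independent (insert y (insert x B0))"
      using indx by (rule z2.independent_insertI)
    obtain \<phi> where \<phi>: "Vector_Spaces.linear z2scale (*) \<phi>" "\<forall>v\<in>insert y (insert x B0). \<phi> v = f0 v"
      using zb.linear_independent_extend[OF indy] by blast
    have zS: "\<forall>v\<in>S. \<phi> v = 0"
    proof
      fix v assume "v \<in> S" then have "v \<in> z2.span B0" using spanB0 by simp
      then show "\<phi> v = 0" using zb.linear_eq_0_on_span[OF \<phi>(1), of B0 v] \<phi>(2) unfolding f0_def by simp
    qed
    have "x \<notin> B0" "y \<notin> B0" using x y B0(1) by blast+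
    then have "\<phi> x = 1" "\<phi> y = 1" using \<phi>(2) unfolding f0_def by simp_all
    then show ?thesis using \<phi> zS by blast
  qed
qed

definition good :: "nat \<Rightarrow> (nat \<Rightarrow> bit) set \<Rightarrow> ((nat \<Rightarrow> bit) \<Rightarrow> (nat \<Rightarrow> bit)) \<Rightarrow> bool" where
  "good n S g \<longleftrightarrow> module_hom z2scale z2scale g \<and> (\<forall>z. g (g z) = z) \<and> (\<forall>v\<in>S. g v = v) \<and>
     (\<forall>z\<in>Z2vecs n. g z \<in> Z2vecs n)"

lemma good_exists:
  assumes S: "z2.subspace S" and x: "x \<notin> S" "x \<in> Z2vecs n" and y: "y \<notin> S" "y \<in> Z2vecs n"
  shows "\<exists>g. good n S g \<and> g x = y"
proof -
  obtain \<phi> where \<phi>: "Vector_Spaces.linear z2scale ((*) :: bit \<Rightarrow> bit \<Rightarrow> bit) \<phi>" "\<forall>v\<in>S. \<phi> v = 0" "\<phi> x = 1" "\<phi> y = 1"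
    using functional_exists[OF S x(1) y(1)] by blast
  have add: "\<phi> (a + b) = \<phi> a + \<phi> b" for a b using zb.linear_add[OF \<phi>(1)] by simp
  have scl: "\<phi> (z2scale c a) = c * \<phi> a" for c a using zb.linear_scale[OF \<phi>(1)] by simp
  define g where "g = (\<lambda>z. z + z2scale (\<phi> z) (x + y))"
  have hom: "module_hom z2scale z2scale g"
    unfolding module_hom_iff
  proof (intro conjI allI)
    show "module z2scale" by (rule z2.module_axioms)
    show "module z2scale" by (rule z2.module_axioms)
    fix a b :: "nat \<Rightarrow> bit" and c :: bit
    show "g (a + b) = g a + g b"
      unfolding g_def add z2.scale_left_distrib by (simp add: algebra_simps)
    show "g (z2scale c a) = z2scale c (g a)"
      unfolding g_def scl z2.scale_right_distrib z2.scale_scale by simp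
  qed
  have pxy: "\<phi> (x + y) = 0" using add \<phi> by simp
  have inv: "g (g z) = z" for z
  proof -
    have "g (g z) = z + z2scale (\<phi> z) (x + y) + z2scale (\<phi> z + \<phi> z * \<phi> (x + y)) (x + y)"
      unfolding g_def by (simp add: add scl)
    also have "\<dots> = z" using pxy by (simp add: z2scale_def fun_eq_iff algebra_simps)
    finally show ?thesis .
  qed
  have fixS: "\<forall>v\<in>S. g v = v" using \<phi>(2) by (simp add: g_def)
  have cl: "\<forall>z\<in>Z2vecs n. g z \<in> Z2vecs n"
    using x y by (auto simp: g_def Z2vecs_def z2scale_def)
  have "g x = y" using \<phi>(3) by (simp add: g_def fun_eq_iff)
  then show ?thesis using hom inv fixS cl unfolding good_def by blast
qed

lemma good_inj: "good n S g \<Longrightarrow> inj g"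
  unfolding good_def by (metis injI)

lemma good_span:
  assumes "good n S g" shows "g ` z2.span (S \<union> X) = z2.span (S \<union> g ` X)"
proof -
  interpret module_hom z2scale z2scale g using assms unfolding good_def by blast
  have "g ` (S \<union> X) = S \<union> g ` X" using assms unfolding good_def by force
  then show ?thesis using span_image[of "S \<union> X"] by simp
qed

lemma good_indep:
  assumes g: "good n (S (l+1)) g" and vs: "vs \<in> indep_tuples n S l s"
  shows "map g vs \<in> indep_tuples n S l s"
proof -
  interpret module_hom z2scale z2scale g using g unfolding good_def by blast
  have inj: "inj g" using good_inj[OF g] .
  have v: "length vs = s" "distinct vs" "set vs \<subseteq> Z2vecs n" "z2.independent (set vs)"
     "z2.span (set vs) \<inter> S (l + 1) = {0}"
    using vs unfolding indep_tuples_def by auto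
  have d: "distinct (map g vs)" using v(2) inj by (simp add: distinct_map inj_on_def inj_def)
  have sub: "set (map g vs) \<subseteq> Z2vecs n" using v(3) g unfolding good_def by auto
  have ind: "z2.independent (set (map g vs))"
    using independent_injective_image[OF v(4)] inj by (simp add: inj_on_def inj_def)
  have "z2.span (set (map g vs)) \<inter> S (l + 1) \<subseteq> {0}"
  proof
    fix w assume w: "w \<in> z2.span (set (map g vs)) \<inter> S (l + 1)"
    then obtain u where u: "u \<in> z2.span (set vs)" "w = g u" using span_image[of "set vs"] by auto
    have "g w = w" using w g unfolding good_def by blast
    then have "u = w" using u g unfolding good_def by metis
    then have "u = 0" using u w v(5) by blast
    then show "w \<in> {0}" using u by simp
  qed
  moreover have "0 \<in> S (l+1)" using v(5) by blast
  ultimately have "z2.span (set (map g vs)) \<inter> S (l + 1) = {0}" using z2.span_zero by blast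
  then show ?thesis using v d sub ind unfolding indep_tuples_def by auto
qed

lemma card_filter_sum: "finite A \<Longrightarrow> card {x\<in>A. P x} = (\<Sum>x\<in>A. if P x then 1 else 0 :: nat)"
  by (simp add: sum.If_cases Int_def conj_commute)

lemma count_bound:
  fixes \<tau> :: "'w \<Rightarrow> (nat \<Rightarrow> bit) list"
  assumes S: "z2.subspace S'" "S' \<subseteq> Z2vecs n" "S' \<subseteq> z2.span B0" "finite B0" "card B0 < n"
    and \<Omega>: "finite \<Omega>" "\<forall>\<omega>\<in>\<Omega>. set (\<tau> \<omega>) \<subseteq> Z2vecs n \<and> length (\<tau> \<omega>) = s"
    and inv: "\<And>g. good n S' g \<Longrightarrow> \<exists>\<sigma>. \<sigma> ` \<Omega> \<subseteq> \<Omega> \<and> inj_on \<sigma> \<Omega> \<and> (\<forall>\<omega>\<in>\<Omega>. \<tau> (\<sigma> \<omega>) = map g (\<tau> \<omega>))"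
    and x: "x \<in> Z2vecs n" "x \<notin> S'"
  shows "card {\<omega>\<in>\<Omega>. x \<in> z2.span (S' \<union> set (\<tau> \<omega>))} * 2 ^ (n - 1) \<le> card \<Omega> * 2 ^ (card B0 + s)"
proof -
  define P where "P y = {\<omega>\<in>\<Omega>. y \<in> z2.span (S' \<union> set (\<tau> \<omega>))}" for y
  define Y where "Y = Z2vecs n - S'"
  have finY: "finite Y" unfolding Y_def using Z2vecs_finite by simp
  have le: "card (P x) \<le> card (P y)" if y: "y \<in> Y" for y
  proof -
    obtain g where g: "good n S' g" "g x = y"
      using good_exists[OF S(1) x(2) x(1)] y unfolding Y_def by blast
    obtain \<sigma> where \<sigma>: "\<sigma> ` \<Omega> \<subseteq> \<Omega>" "inj_on \<sigma> \<Omega>" "\<forall>\<omega>\<in>\<Omega>. \<tau> (\<sigma> \<omega>) = map g (\<tau> \<omega>)"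
      using inv[OF g(1)] by blast
    have "\<sigma> ` P x \<subseteq> P y"
    proof
      fix \<omega>' assume "\<omega>' \<in> \<sigma> ` P x"
      then obtain \<omega> where w: "\<omega> \<in> \<Omega>" "x \<in> z2.span (S' \<union> set (\<tau> \<omega>))" "\<omega>' = \<sigma> \<omega>"
        unfolding P_def by blast
      have "y \<in> g ` z2.span (S' \<union> set (\<tau> \<omega>))" using w(2) g(2) by blast
      also have "\<dots> = z2.span (S' \<union> set (\<tau> \<omega>'))"
        using good_span[OF g(1)] \<sigma>(3) w by simp
      finally show "\<omega>' \<in> P y" unfolding P_def using w \<sigma>(1) by blast
    qed
    moreover have "inj_on \<sigma> (P x)" using \<sigma>(2) unfolding P_def by (rule inj_on_subset) blast
    moreover have "finite (P y)" unfolding P_def using \<Omega>(1) by simp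
    ultimately show ?thesis using card_inj_on_le by blast
  qed
  have spanB: "card (z2.span (S' \<union> set (\<tau> \<omega>))) \<le> 2 ^ (card B0 + s)" if w: "\<omega> \<in> \<Omega>" for \<omega>
  proof -
    have "S' \<union> set (\<tau> \<omega>) \<subseteq> z2.span (B0 \<union> set (\<tau> \<omega>))"
      using S(3) z2.span_mono[of B0 "B0 \<union> set (\<tau> \<omega>)"] z2.span_superset[of "B0 \<union> set (\<tau> \<omega>)"] by blast
    then have sub: "z2.span (S' \<union> set (\<tau> \<omega>)) \<subseteq> z2.span (B0 \<union> set (\<tau> \<omega>))"
      by (simp add: z2.span_minimal)
    have fin: "finite (B0 \<union> set (\<tau> \<omega>))" using S(4) by simp
    have "card (B0 \<union> set (\<tau> \<omega>)) \<le> card B0 + s"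
      using card_Un_le[of B0 "set (\<tau> \<omega>)"] card_length[of "\<tau> \<omega>"] \<Omega>(2) w by fastforce
    then have "card (z2.span (B0 \<union> set (\<tau> \<omega>))) \<le> 2 ^ (card B0 + s)"
      using span_card[OF fin] by (meson order_trans one_le_numeral power_increasing)
    then show ?thesis using sub span_card[OF fin] card_mono by (meson order_trans)
  qed
  have finT: "finite (z2.span (S' \<union> set (\<tau> \<omega>)))" if w: "\<omega> \<in> \<Omega>" for \<omega>
  proof -
    have "S' \<union> set (\<tau> \<omega>) \<subseteq> Z2vecs n" using S(2) \<Omega>(2) w by blast
    then have "z2.span (S' \<union> set (\<tau> \<omega>)) \<subseteq> Z2vecs n" using Z2vecs_subspace z2.span_minimal by blast
    then show ?thesis using Z2vecs_finite finite_subset by blast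
  qed
  have "card Y * card (P x) \<le> (\<Sum>y\<in>Y. card (P y))"
    using sum_bounded_below[of Y "card (P x)" "\<lambda>y. card (P y)"] le by simp
  also have "\<dots> = (\<Sum>y\<in>Y. \<Sum>\<omega>\<in>\<Omega>. if y \<in> z2.span (S' \<union> set (\<tau> \<omega>)) then 1 else 0)"
    unfolding P_def using card_filter_sum[OF \<Omega>(1)] by simp
  also have "\<dots> = (\<Sum>\<omega>\<in>\<Omega>. \<Sum>y\<in>Y. if y \<in> z2.span (S' \<union> set (\<tau> \<omega>)) then 1 else 0)"
    by (rule sum.swap)
  also have "\<dots> = (\<Sum>\<omega>\<in>\<Omega>. card {y\<in>Y. y \<in> z2.span (S' \<union> set (\<tau> \<omega>))})"
    using card_filter_sum[OF finY] by simp
  also have "\<dots> \<le> (\<Sum>\<omega>\<in>\<Omega>. 2 ^ (card B0 + s))"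
  proof (rule sum_mono)
    fix \<omega> assume w: "\<omega> \<in> \<Omega>"
    have "card {y\<in>Y. y \<in> z2.span (S' \<union> set (\<tau> \<omega>))} \<le> card (z2.span (S' \<union> set (\<tau> \<omega>)))"
      by (rule card_mono) (use finT[OF w] in auto)
    then show "card {y\<in>Y. y \<in> z2.span (S' \<union> set (\<tau> \<omega>))} \<le> 2 ^ (card B0 + s)"
      using spanB[OF w] by linarith
  qed
  also have "\<dots> = card \<Omega> * 2 ^ (card B0 + s)" by simp
  finally have A: "card Y * card (P x) \<le> card \<Omega> * 2 ^ (card B0 + s)" .
  have cS: "card S' \<le> 2 ^ card B0"
  proof -
    show ?thesis using span_card[OF S(4)] S(3) card_mono by (meson order_trans)
  qed
  have "2 ^ card B0 \<le> (2::nat) ^ (n - 1)" using S(5) by (intro power_increasing) auto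
  moreover have "(2::nat) ^ n = 2 * 2 ^ (n - 1)" using S(5) by (cases n) auto
  moreover have "card Y = 2 ^ n - card S'"
    unfolding Y_def using card_Diff_subset[OF finite_subset[OF S(2) Z2vecs_finite] S(2)] Z2vecs_card by simp
  ultimately have "2 ^ (n - 1) \<le> card Y" using cS by linarith
  then have "card (P x) * 2 ^ (n - 1) \<le> card Y * card (P x)" by (simp add: mult.commute)
  then show ?thesis using A unfolding P_def by linarith
qed

lemma chain_sub:
  fixes l :: nat and S :: "nat \<Rightarrow> (nat \<Rightarrow> bit) set"
  assumes "\<forall>j\<in>{1..l}. S j \<subseteq> S (j + 1)" "1 \<le> j" "j \<le> l + 1"
  shows "S j \<subseteq> S (l + 1)"
proof -
  have "\<forall>j. 1 \<le> j \<and> j + k = l + 1 \<longrightarrow> S j \<subseteq> S (l + 1)" for k :: nat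
  proof (induction k)
    case 0 then show ?case by auto
  next
    case (Suc k)
    show ?case
    proof (intro allI impI)
      fix j assume j: "1 \<le> j \<and> j + Suc k = l + 1"
      then have "S j \<subseteq> S (j + 1)" using assms(1) by auto
      moreover have "S (j + 1) \<subseteq> S (l + 1)" using Suc.IH j by auto
      ultimately show "S j \<subseteq> S (l + 1)" by blast
    qed
  qed
  from this[of "l + 1 - j"] show ?thesis using assms(2,3) by simp
qed

lemma tsp_diff:
  assumes Sj: "z2.subspace (S j)" "S j \<subseteq> S (l + 1)" and S': "z2.subspace (S (l + 1))"
    and vs: "vs \<in> indep_tuples n S l s"
    and d: "(x \<in> Tsp S vs j) \<noteq> (x \<in> S j)"
  shows "x \<notin> S (l + 1) \<and> x \<in> z2.span (S (l + 1) \<union> set vs)"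
proof -
  have x1: "x \<in> Tsp S vs j" "x \<notin> S j"
    using d z2.span_superset[of "S j \<union> set vs"] unfolding Tsp_def by blast+
  have spSj: "z2.span (S j) = S j" using Sj(1) z2.span_eq_iff by blast
  obtain a b where ab: "a \<in> S j" "b \<in> z2.span (set vs)" "x = a + b"
    using x1(1) unfolding Tsp_def z2.span_Un spSj by blast
  have "x \<notin> S (l + 1)"
  proof
    assume xS: "x \<in> S (l + 1)"
    have "b = x - a" using ab by simp
    then have "b \<in> S (l + 1)" using xS ab(1) Sj(2) S' z2.subspace_diff by blast
    then have "b = 0" using ab(2) vs unfolding indep_tuples_def by blast
    then show False using ab x1(2) by simp
  qed
  moreover have "x \<in> z2.span (S (l + 1) \<union> set vs)"
    using x1(1) Sj(2) unfolding Tsp_def by (meson Un_mono order_refl subsetD z2.span_mono)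
  ultimately show ?thesis by blast
qed

lemma span_SX:
  assumes "S' \<subseteq> z2.span B0" "finite B0" "finite X"
  shows "z2.span (S' \<union> X) \<subseteq> z2.span (B0 \<union> X) \<and> finite (z2.span (B0 \<union> X)) \<and>
         card (z2.span (S' \<union> X)) \<le> 2 ^ (card B0 + card X)"
proof -
  have "S' \<union> X \<subseteq> z2.span (B0 \<union> X)"
    using assms(1) z2.span_mono[of B0 "B0 \<union> X"] z2.span_superset[of "B0 \<union> X"] by blast
  then have sub: "z2.span (S' \<union> X) \<subseteq> z2.span (B0 \<union> X)" by (simp add: z2.span_minimal)
  have fin: "finite (B0 \<union> X)" using assms by simp
  have "card (B0 \<union> X) \<le> card B0 + card X" by (rule card_Un_le)
  then have "card (z2.span (B0 \<union> X)) \<le> 2 ^ (card B0 + card X)"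
    using span_card[OF fin] by (meson order_trans one_le_numeral power_increasing)
  then show ?thesis using sub span_card[OF fin] card_mono by (meson order_trans)
qed

lemma indep_exists:
  assumes S': "z2.subspace (S (l+1))" "S (l+1) \<subseteq> z2.span B0" "finite B0" "card B0 + s \<le> n"
  shows "indep_tuples n S l s \<noteq> {}"
proof -
  have "k \<le> s \<Longrightarrow> \<exists>vs. length vs = k \<and> distinct vs \<and> set vs \<subseteq> Z2vecs n \<and> z2.independent (set vs) \<and>
      z2.span (set vs) \<inter> S (l + 1) = {0}" for k
  proof (induction k)
    case 0 then show ?case using S'(1) z2.subspace_0 z2.independent_empty by auto
  next
    case (Suc k)
    have "k \<le> s" using Suc.prems by simp
    then obtain vs where vs: "length vs = k" "distinct vs" "set vs \<subseteq> Z2vecs n" "z2.independent (set vs)"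
      "z2.span (set vs) \<inter> S (l + 1) = {0}" using Suc.IH by blast
    have "card (set vs) \<le> k" using vs(1) card_length by metis
    then have "card (z2.span (S (l+1) \<union> set vs)) \<le> 2 ^ (card B0 + k)"
      using span_SX[OF S'(2,3) List.finite_set[of vs]] by (meson add_left_mono le_trans one_le_numeral power_increasing)
    also have "\<dots> < 2 ^ n" using Suc.prems S'(4) by (intro power_strict_increasing) auto
    finally have "card (z2.span (S (l+1) \<union> set vs)) < card (Z2vecs n)" using Z2vecs_card by simp
    moreover have fin: "finite (z2.span (S (l+1) \<union> set vs))"
      using span_SX[OF S'(2,3) List.finite_set[of vs]] finite_subset by blast
    ultimately have "\<not> Z2vecs n \<subseteq> z2.span (S (l+1) \<union> set vs)"
      using card_mono[OF fin] not_le by blast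
    then obtain v where v: "v \<in> Z2vecs n" "v \<notin> z2.span (S (l+1) \<union> set vs)"
      by blast
    have nv: "v \<notin> z2.span (set vs)" using v(2) z2.span_mono[of "set vs" "S (l+1) \<union> set vs"] by blast
    have nv2: "v \<notin> set vs" using nv z2.span_superset by blast
    have "z2.span (insert v (set vs)) \<inter> S (l + 1) \<subseteq> {0}"
    proof
      fix w assume w: "w \<in> z2.span (insert v (set vs)) \<inter> S (l + 1)"
      then obtain c where c: "w - z2scale c v \<in> z2.span (set vs)" unfolding z2.span_insert by blast
      show "w \<in> {0}"
      proof (cases "c = 0")
        case True then show ?thesis using c w vs(5) by auto
      next
        case False then have "c = 1" using bit_cases2 by blast
        then have "w - v \<in> z2.span (set vs)" using c by simp
        moreover have "z2.span (set vs) \<subseteq> z2.span (S (l+1) \<union> set vs)" by (rule z2.span_mono) blast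
        ultimately have a: "w - v \<in> z2.span (S (l+1) \<union> set vs)" by blast
        have "w \<in> S (l+1) \<union> set vs" using w by blast
        then have b: "w \<in> z2.span (S (l+1) \<union> set vs)" using z2.span_base by blast
        have "w - (w - v) \<in> z2.span (S (l+1) \<union> set vs)" using z2.span_diff[OF b a] .
        then show ?thesis using v(2) by simp
      qed
    qed
    moreover have "0 \<in> S (l + 1)" using vs(5) by blast
    moreover have "0 \<in> z2.span (insert v (set vs))" by (rule z2.span_zero)
    ultimately have e: "z2.span (insert v (set vs)) \<inter> S (l + 1) = {0}" by blast
    have i: "z2.independent (insert v (set vs))" by (rule z2.independent_insertI[OF nv vs(4)])
    have "length (v # vs) = Suc k" using vs(1) by simp
    moreover have "distinct (v # vs)" using vs(2) nv2 by simp
    moreover have "set (v # vs) \<subseteq> Z2vecs n" using vs(3) v(1) by simp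
    moreover have "z2.independent (set (v # vs))" using i by simp
    moreover have "z2.span (set (v # vs)) \<inter> S (l + 1) = {0}" using e by (simp only: list.set(2))
    ultimately show ?case by (intro exI[of _ "v # vs"] conjI)
  qed
  from this[OF order_refl] obtain vs where H: "length vs = s" "distinct vs" "set vs \<subseteq> Z2vecs n"
    "z2.independent (set vs)" "z2.span (set vs) \<inter> S (l + 1) = {0}" by blast
  then have "vs \<in> indep_tuples n S l s" unfolding indep_tuples_def mem_Collect_eq by (intro conjI)
  then show ?thesis by blast
qed

section \<open>Quantum part\<close>

definition nrm :: "label set \<Rightarrow> (label \<Rightarrow> complex) \<Rightarrow> real" where
  "nrm B \<psi> = L2_set (\<lambda>z. cmod (\<psi> z)) B"

lemma nrm_sq: "(nrm B \<psi>)\<^sup>2 = (\<Sum>z\<in>B. (cmod (\<psi> z))\<^sup>2)"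
  unfolding nrm_def L2_set_def by (simp add: sum_nonneg)

lemma nrm_nonneg: "0 \<le> nrm B \<psi>" unfolding nrm_def by simp

lemma nrm_eqI: "(\<Sum>z\<in>B. (cmod (\<psi> z))\<^sup>2) = (\<Sum>z\<in>B. (cmod (\<phi> z))\<^sup>2) \<Longrightarrow> nrm B \<psi> = nrm B \<phi>"
  unfolding nrm_def L2_set_def by simp

lemma nrm_triangle: "nrm B (\<lambda>z. a z + b z) \<le> nrm B a + nrm B b"
proof -
  have "nrm B (\<lambda>z. a z + b z) \<le> L2_set (\<lambda>z. cmod (a z) + cmod (b z)) B"
    unfolding nrm_def by (rule L2_set_mono) (auto simp: norm_triangle_ineq)
  also have "\<dots> \<le> nrm B a + nrm B b" unfolding nrm_def by (rule L2_set_triangle_ineq)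
  finally show ?thesis .
qed

lemma apply_norm:
  assumes U: "unitary_on B U" and fin: "finite B"
  shows "nrm B (apply_op B U \<psi>) = nrm B \<psi>"
proof (rule nrm_eqI)
  have "complex_of_real (\<Sum>y\<in>B. (cmod (apply_op B U \<psi> y))\<^sup>2)
      = (\<Sum>y\<in>B. (\<Sum>x\<in>B. U y x * \<psi> x) * cnj (\<Sum>x'\<in>B. U y x' * \<psi> x'))"
    unfolding apply_op_def of_real_sum complex_norm_square ..
  also have "\<dots> = (\<Sum>y\<in>B. \<Sum>x\<in>B. \<Sum>x'\<in>B. \<psi> x * cnj (\<psi> x') * (U y x * cnj (U y x')))"
    unfolding cnj_sum complex_cnj_mult sum_product by (intro sum.cong refl) (simp add: mult_ac)
  also have "\<dots> = (\<Sum>x\<in>B. \<Sum>y\<in>B. \<Sum>x'\<in>B. \<psi> x * cnj (\<psi> x') * (U y x * cnj (U y x')))"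
    by (rule sum.swap)
  also have "\<dots> = (\<Sum>x\<in>B. \<Sum>x'\<in>B. \<Sum>y\<in>B. \<psi> x * cnj (\<psi> x') * (U y x * cnj (U y x')))"
    by (intro sum.cong refl sum.swap)
  also have "\<dots> = (\<Sum>x\<in>B. \<Sum>x'\<in>B. \<psi> x * cnj (\<psi> x') * (\<Sum>y\<in>B. U y x * cnj (U y x')))"
    by (simp add: sum_distrib_left)
  also have "\<dots> = (\<Sum>x\<in>B. \<Sum>x'\<in>B. \<psi> x * cnj (\<psi> x') * (if x' = x then 1 else 0))"
  proof (intro sum.cong refl)
    fix x x' assume xx: "x \<in> B" "x' \<in> B"
    have "(\<Sum>y\<in>B. U y x * cnj (U y x')) = cnj (\<Sum>y\<in>B. cnj (U y x) * U y x')"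
      by (simp add: mult.commute)
    also have "\<dots> = (if x' = x then 1 else 0)" using U xx unfolding unitary_on_def by auto
    finally show "\<psi> x * cnj (\<psi> x') * (\<Sum>y\<in>B. U y x * cnj (U y x')) = \<psi> x * cnj (\<psi> x') * (if x' = x then 1 else 0)"
      by simp
  qed
  also have "\<dots> = (\<Sum>x\<in>B. \<psi> x * cnj (\<psi> x))"
    using fin by (simp add: if_distrib cong: if_cong)
  also have "\<dots> = complex_of_real (\<Sum>x\<in>B. (cmod (\<psi> x))\<^sup>2)"
    unfolding of_real_sum complex_norm_square ..
  finally show "(\<Sum>y\<in>B. (cmod (apply_op B U \<psi> y))\<^sup>2) = (\<Sum>x\<in>B. (cmod (\<psi> x))\<^sup>2)"
    using of_real_eq_iff by blast
qed

lemma apply_diff: "apply_op B U \<psi> y - apply_op B U \<phi> y = apply_op B U (\<lambda>z. \<psi> z - \<phi> z) y"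
  by (simp add: apply_op_def sum_subtractf right_diff_distrib)

definition flip :: "(nat \<times> nat \<Rightarrow> (nat \<Rightarrow> bit) \<Rightarrow> bool) \<Rightarrow> label \<Rightarrow> label" where
  "flip f z = (case z of (ij, x, b, w) \<Rightarrow> (ij, x, b \<noteq> f ij x, w))"

lemma oracle_flip: "oracle_op f \<psi> z = \<psi> (flip f z)"
  by (cases z) (simp add: oracle_op_def flip_def)

lemma flip_flip: "flip f (flip f z) = z"
  by (cases z) (auto simp: flip_def)

definition flipclosed :: "label set \<Rightarrow> bool" where
  "flipclosed B \<longleftrightarrow> (\<forall>z\<in>B. (fst z, fst (snd z), \<not> fst (snd (snd z)), snd (snd (snd z))) \<in> B)"

lemma flip_in: assumes "flipclosed B" "z \<in> B" shows "flip f z \<in> B"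
proof -
  obtain ij x b w where z: "z = (ij, x, b, w)" by (cases z) blast
  show ?thesis
  proof (cases "f ij x")
    case True then show ?thesis using assms unfolding z flip_def flipclosed_def by force
  next
    case False then show ?thesis using assms unfolding z flip_def by simp
  qed
qed

lemma sum_flip: "flipclosed B \<Longrightarrow> (\<Sum>z\<in>B. h (flip f z)) = (\<Sum>z\<in>B. h z)"
  by (rule sum.reindex_bij_witness[of _ "flip f" "flip f"]) (auto simp: flip_flip flip_in)

lemma oracle_norm: "flipclosed B \<Longrightarrow> nrm B (oracle_op f \<psi>) = nrm B \<psi>"
  by (rule nrm_eqI) (simp add: oracle_flip sum_flip[where h = "\<lambda>z. (cmod (\<psi> z))\<^sup>2"])

definition tog :: "label \<Rightarrow> label" where
  "tog z = (fst z, fst (snd z), \<not> fst (snd (snd z)), snd (snd (snd z)))"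

definition Dif :: "(nat \<times> nat \<Rightarrow> (nat \<Rightarrow> bit) \<Rightarrow> bool) \<Rightarrow> (nat \<times> nat \<Rightarrow> (nat \<Rightarrow> bit) \<Rightarrow> bool) \<Rightarrow> label \<Rightarrow> bool" where
  "Dif f g z \<longleftrightarrow> f (fst z) (fst (snd z)) \<noteq> g (fst z) (fst (snd z))"

lemma cmod_diff_sq: "(cmod (a - b))\<^sup>2 \<le> 2 * (cmod a)\<^sup>2 + 2 * (cmod b)\<^sup>2"
proof -
  have "cmod (a - b) \<le> cmod a + cmod b" by (rule norm_triangle_ineq4)
  then have "(cmod (a - b))\<^sup>2 \<le> (cmod a + cmod b)\<^sup>2" by (simp add: power_mono)
  also have "\<dots> \<le> 2 * (cmod a)\<^sup>2 + 2 * (cmod b)\<^sup>2"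
  proof -
    have "(cmod a + cmod b)\<^sup>2 + (cmod a - cmod b)\<^sup>2 = 2 * (cmod a)\<^sup>2 + 2 * (cmod b)\<^sup>2"
      by (simp add: power2_sum power2_diff)
    moreover have "0 \<le> (cmod a - cmod b)\<^sup>2" by simp
    ultimately show ?thesis by linarith
  qed
  finally show ?thesis .
qed

lemma oracle_pt:
  "(cmod (\<psi> (flip f z) - \<psi> (flip g z)))\<^sup>2 \<le>
     (if Dif f g z then 2 * (cmod (\<psi> z))\<^sup>2 + 2 * (cmod (\<psi> (tog z)))\<^sup>2 else 0)"
proof -
  obtain ij x b w where z: "z = (ij, x, b, w)" by (cases z) blast
  show ?thesis
  proof (cases "Dif f g z")
    case False then show ?thesis unfolding z Dif_def flip_def by simp
  next
    case True
    then have "(flip f z = z \<and> flip g z = tog z) \<or> (flip f z = tog z \<and> flip g z = z)"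
      unfolding z Dif_def flip_def tog_def by auto
    then show ?thesis using True cmod_diff_sq[of "\<psi> z" "\<psi> (tog z)"] cmod_diff_sq[of "\<psi> (tog z)" "\<psi> z"]
      by auto
  qed
qed

lemma tog_tog: "tog (tog z) = z" by (simp add: tog_def)
lemma tog_in: "flipclosed B \<Longrightarrow> z \<in> B \<Longrightarrow> tog z \<in> B" unfolding flipclosed_def tog_def by blast
lemma Dif_tog: "Dif f g (tog z) = Dif f g z" by (simp add: Dif_def tog_def)

lemma oracle_diff:
  assumes fc: "flipclosed B"
  shows "(nrm B (\<lambda>z. oracle_op f \<psi> z - oracle_op g \<psi> z))\<^sup>2 \<le>
     4 * (\<Sum>z\<in>B. if Dif f g z then (cmod (\<psi> z))\<^sup>2 else 0)"
proof -
  have "(nrm B (\<lambda>z. oracle_op f \<psi> z - oracle_op g \<psi> z))\<^sup>2 = (\<Sum>z\<in>B. (cmod (\<psi> (flip f z) - \<psi> (flip g z)))\<^sup>2)"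
    unfolding nrm_sq oracle_flip ..
  also have "\<dots> \<le> (\<Sum>z\<in>B. if Dif f g z then 2 * (cmod (\<psi> z))\<^sup>2 + 2 * (cmod (\<psi> (tog z)))\<^sup>2 else 0)"
    by (rule sum_mono) (rule oracle_pt)
  also have "\<dots> = (\<Sum>z\<in>B. if Dif f g z then 2 * (cmod (\<psi> z))\<^sup>2 else 0) + (\<Sum>z\<in>B. if Dif f g z then 2 * (cmod (\<psi> (tog z)))\<^sup>2 else 0)"
    by (simp add: sum.distrib[symmetric] if_distrib cong: if_cong)
  also have "(\<Sum>z\<in>B. if Dif f g z then 2 * (cmod (\<psi> (tog z)))\<^sup>2 else 0) = (\<Sum>z\<in>B. if Dif f g z then 2 * (cmod (\<psi> z))\<^sup>2 else 0)"
    by (rule sum.reindex_bij_witness[of _ tog tog]) (auto simp: tog_tog tog_in[OF fc] Dif_tog)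
  also have "(\<Sum>z\<in>B. if Dif f g z then 2 * (cmod (\<psi> z))\<^sup>2 else 0) + (\<Sum>z\<in>B. if Dif f g z then 2 * (cmod (\<psi> z))\<^sup>2 else 0)
     = 4 * (\<Sum>z\<in>B. if Dif f g z then (cmod (\<psi> z))\<^sup>2 else 0)"
    by (simp add: sum_distrib_left if_distrib cong: if_cong)
  finally show ?thesis .
qed

fun qst :: "label set \<Rightarrow> (nat \<times> nat \<Rightarrow> (nat \<Rightarrow> bit) \<Rightarrow> bool) \<Rightarrow>
    (label \<Rightarrow> label \<Rightarrow> complex) list \<Rightarrow> (label \<Rightarrow> complex) \<Rightarrow> (label \<Rightarrow> complex) list" where
  "qst B g [] \<psi> = []"
| "qst B g [U] \<psi> = []"
| "qst B g (U # V # Us) \<psi> = apply_op B U \<psi> # qst B g (V # Us) (oracle_op g (apply_op B U \<psi>))"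

lemma qst_length: "length (qst B g Us \<psi>) = length Us - 1"
  by (induction B g Us \<psi> rule: qst.induct) auto

lemma run_norm:
  assumes "\<forall>U\<in>set Us. unitary_on B U" "finite B" "flipclosed B"
  shows "nrm B (run B f Us \<psi>) = nrm B \<psi>"
  using assms
proof (induction B f Us \<psi> rule: run.induct)
  case (2 B f U \<psi>) then show ?case by (simp add: apply_norm)
next
  case (3 B f U V Us \<psi>)
  then have "nrm B (run B f (V # Us) (oracle_op f (apply_op B U \<psi>))) = nrm B (oracle_op f (apply_op B U \<psi>))"
    by simp
  also have "\<dots> = nrm B \<psi>" using 3 by (simp add: oracle_norm apply_norm)
  finally show ?case by simp
qed simp

lemma qst_norm:
  assumes "\<forall>U\<in>set Us. unitary_on B U" "finite B" "flipclosed B"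
  shows "\<forall>st\<in>set (qst B g Us \<psi>). nrm B st = nrm B \<psi>"
  using assms
proof (induction B g Us \<psi> rule: qst.induct)
  case (3 B g U V Us \<psi>)
  have "nrm B (oracle_op g (apply_op B U \<psi>)) = nrm B \<psi>" using 3 by (simp add: oracle_norm apply_norm)
  moreover have "nrm B (apply_op B U \<psi>) = nrm B \<psi>" using 3 by (simp add: apply_norm)
  ultimately show ?case using 3 by simp
qed simp_all

lemma hybrid:
  assumes "\<forall>U\<in>set Us. unitary_on B U" "finite B" "flipclosed B"
  shows "nrm B (\<lambda>z. run B f Us \<psi> z - run B g Us \<phi> z) \<le> nrm B (\<lambda>z. \<psi> z - \<phi> z) +
     sum_list (map (\<lambda>st. nrm B (\<lambda>z. oracle_op f st z - oracle_op g st z)) (qst B g Us \<phi>))"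
  using assms
proof (induction Us arbitrary: \<psi> \<phi> rule: induct_list012)
  case 1 then show ?case by simp
next
  case (2 U)
  have "nrm B (\<lambda>z. apply_op B U \<psi> z - apply_op B U \<phi> z) = nrm B (\<lambda>z. \<psi> z - \<phi> z)"
    unfolding apply_diff using 2 by (simp add: apply_norm)
  then show ?case by simp
next
  case (3 U V Us)
  define a where "a = apply_op B U \<psi>"
  define c where "c = apply_op B U \<phi>"
  have IH: "nrm B (\<lambda>z. run B f (V # Us) (oracle_op f a) z - run B g (V # Us) (oracle_op g c) z)
      \<le> nrm B (\<lambda>z. oracle_op f a z - oracle_op g c z) +
        sum_list (map (\<lambda>st. nrm B (\<lambda>z. oracle_op f st z - oracle_op g st z)) (qst B g (V # Us) (oracle_op g c)))"
    using 3 by simp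
  have "nrm B (\<lambda>z. oracle_op f a z - oracle_op g c z)
      \<le> nrm B (\<lambda>z. oracle_op f a z - oracle_op f c z) + nrm B (\<lambda>z. oracle_op f c z - oracle_op g c z)"
    using nrm_triangle[of B "\<lambda>z. oracle_op f a z - oracle_op f c z" "\<lambda>z. oracle_op f c z - oracle_op g c z"]
    by simp
  moreover have "nrm B (\<lambda>z. oracle_op f a z - oracle_op f c z) = nrm B (\<lambda>z. \<psi> z - \<phi> z)"
  proof -
    have "(\<lambda>z. oracle_op f a z - oracle_op f c z) = oracle_op f (\<lambda>z. a z - c z)"
      by (simp add: oracle_flip fun_eq_iff)
    then have "nrm B (\<lambda>z. oracle_op f a z - oracle_op f c z) = nrm B (\<lambda>z. a z - c z)"
      using 3 by (simp add: oracle_norm)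
    also have "\<dots> = nrm B (\<lambda>z. \<psi> z - \<phi> z)"
      unfolding a_def c_def apply_diff using 3 by (simp add: apply_norm)
    finally show ?thesis .
  qed
  ultimately show ?case using IH unfolding a_def c_def by simp
qed

lemma accept_diff:
  assumes fin: "finite B" and n1: "nrm B (run B f Us init_state) = 1" and n2: "nrm B (run B g Us init_state) = 1"
  shows "\<bar>accept_prob B f Us - accept_prob B g Us\<bar> \<le> 2 * nrm B (\<lambda>z. run B f Us init_state z - run B g Us init_state z)"
proof -
  define a where "a = run B f Us init_state"
  define c where "c = run B g Us init_state"
  have "\<bar>accept_prob B f Us - accept_prob B g Us\<bar>
     = \<bar>\<Sum>z\<in>B. if fst (snd (snd z)) then (cmod (a z))\<^sup>2 - (cmod (c z))\<^sup>2 else 0\<bar>"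
    unfolding accept_prob_def a_def c_def sum_subtractf[symmetric] by (simp add: if_distrib cong: if_cong)
  also have "\<dots> \<le> (\<Sum>z\<in>B. \<bar>if fst (snd (snd z)) then (cmod (a z))\<^sup>2 - (cmod (c z))\<^sup>2 else 0\<bar>)"
    by (rule sum_abs)
  also have "\<dots> \<le> (\<Sum>z\<in>B. \<bar>cmod (a z - c z)\<bar> * \<bar>cmod (a z) + cmod (c z)\<bar>)"
  proof (rule sum_mono)
    fix z
    have e: "(cmod (a z))\<^sup>2 - (cmod (c z))\<^sup>2 = (cmod (a z) - cmod (c z)) * (cmod (a z) + cmod (c z))"
      by (simp add: power2_eq_square algebra_simps)
    have "\<bar>(cmod (a z))\<^sup>2 - (cmod (c z))\<^sup>2\<bar> = \<bar>cmod (a z) - cmod (c z)\<bar> * (cmod (a z) + cmod (c z))"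
      unfolding e abs_mult by simp
    also have "\<dots> \<le> cmod (a z - c z) * (cmod (a z) + cmod (c z))"
      by (intro mult_right_mono norm_triangle_ineq3) simp
    finally show "\<bar>if fst (snd (snd z)) then (cmod (a z))\<^sup>2 - (cmod (c z))\<^sup>2 else 0\<bar>
        \<le> \<bar>cmod (a z - c z)\<bar> * \<bar>cmod (a z) + cmod (c z)\<bar>" by simp
  qed
  also have "\<dots> \<le> L2_set (\<lambda>z. cmod (a z - c z)) B * L2_set (\<lambda>z. cmod (a z) + cmod (c z)) B"
    by (rule L2_set_mult_ineq)
  also have "\<dots> \<le> L2_set (\<lambda>z. cmod (a z - c z)) B * 2"
  proof (rule mult_left_mono)
    have "L2_set (\<lambda>z. cmod (a z) + cmod (c z)) B \<le> nrm B a + nrm B c"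
      unfolding nrm_def by (rule L2_set_triangle_ineq)
    then show "L2_set (\<lambda>z. cmod (a z) + cmod (c z)) B \<le> 2" using n1 n2 unfolding a_def c_def by simp
  qed simp
  finally show ?thesis unfolding a_def c_def nrm_def by (simp add: mult.commute)
qed

lemma sum_sum_list: "(\<Sum>w\<in>\<Omega>. sum_list (map (h w) L)) = sum_list (map (\<lambda>st. \<Sum>w\<in>\<Omega>. h w st) L)"
  by (induction L) (auto simp: sum.distrib)

lemma sum_list_le: "(\<forall>x\<in>set L. f x \<le> (c::real)) \<Longrightarrow> sum_list (map f L) \<le> real (length L) * c"
  by (induction L) (auto simp: algebra_simps)

lemma cs_sum:
  assumes "finite \<Omega>" "\<forall>w\<in>\<Omega>. 0 \<le> x w"
  shows "(\<Sum>w\<in>\<Omega>. x w) \<le> sqrt (real (card \<Omega>)) * sqrt (\<Sum>w\<in>\<Omega>. (x w)\<^sup>2)"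
proof -
  have "(\<Sum>w\<in>\<Omega>. x w) = (\<Sum>w\<in>\<Omega>. \<bar>x w\<bar> * \<bar>1\<bar>)" using assms by simp
  also have "\<dots> \<le> L2_set x \<Omega> * L2_set (\<lambda>_. 1) \<Omega>" by (rule L2_set_mult_ineq)
  also have "\<dots> = sqrt (real (card \<Omega>)) * sqrt (\<Sum>w\<in>\<Omega>. (x w)\<^sup>2)"
    by (simp add: L2_set_constant L2_set_def)
  finally show ?thesis .
qed

lemma per_state:
  assumes fin: "finite \<Omega>" "finite B" and fc: "flipclosed B" and st: "nrm B st = 1"
    and cnt: "\<forall>z\<in>B. real (card {w\<in>\<Omega>. Dif (F w) G z}) \<le> p * real (card \<Omega>)" and p: "0 \<le> p"
  shows "(\<Sum>w\<in>\<Omega>. nrm B (\<lambda>z. oracle_op (F w) st z - oracle_op G st z)) \<le> 2 * real (card \<Omega>) * sqrt p"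
proof -
  have "(\<Sum>w\<in>\<Omega>. (nrm B (\<lambda>z. oracle_op (F w) st z - oracle_op G st z))\<^sup>2)
      \<le> (\<Sum>w\<in>\<Omega>. 4 * (\<Sum>z\<in>B. if Dif (F w) G z then (cmod (st z))\<^sup>2 else 0))"
    by (rule sum_mono) (rule oracle_diff[OF fc])
  also have "\<dots> = 4 * (\<Sum>z\<in>B. (cmod (st z))\<^sup>2 * real (card {w\<in>\<Omega>. Dif (F w) G z}))"
  proof -
    have "(\<Sum>w\<in>\<Omega>. \<Sum>z\<in>B. if Dif (F w) G z then (cmod (st z))\<^sup>2 else 0)
        = (\<Sum>z\<in>B. \<Sum>w\<in>\<Omega>. if Dif (F w) G z then (cmod (st z))\<^sup>2 else 0)" by (rule sum.swap)
    also have "\<dots> = (\<Sum>z\<in>B. (cmod (st z))\<^sup>2 * real (card {w\<in>\<Omega>. Dif (F w) G z}))"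
    proof (rule sum.cong[OF refl])
      fix z
      have "(\<Sum>w\<in>\<Omega>. if Dif (F w) G z then (cmod (st z))\<^sup>2 else 0) = (\<Sum>w\<in>{w\<in>\<Omega>. Dif (F w) G z}. (cmod (st z))\<^sup>2)"
        using fin(1) by (simp add: sum.If_cases Int_def conj_commute)
      then show "(\<Sum>w\<in>\<Omega>. if Dif (F w) G z then (cmod (st z))\<^sup>2 else 0) = (cmod (st z))\<^sup>2 * real (card {w\<in>\<Omega>. Dif (F w) G z})"
        by simp
    qed
    finally show ?thesis by (simp add: sum_distrib_left[symmetric])
  qed
  also have "\<dots> \<le> 4 * (\<Sum>z\<in>B. (cmod (st z))\<^sup>2 * (p * real (card \<Omega>)))"
    using cnt by (intro mult_left_mono sum_mono mult_left_mono) auto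
  also have "\<dots> = 4 * p * real (card \<Omega>) * (nrm B st)\<^sup>2"
    unfolding nrm_sq by (simp add: sum_distrib_left[symmetric] mult_ac)
  also have "\<dots> = 4 * p * real (card \<Omega>)" using st by simp
  finally have sq: "(\<Sum>w\<in>\<Omega>. (nrm B (\<lambda>z. oracle_op (F w) st z - oracle_op G st z))\<^sup>2) \<le> 4 * p * real (card \<Omega>)" .
  have "(\<Sum>w\<in>\<Omega>. nrm B (\<lambda>z. oracle_op (F w) st z - oracle_op G st z))
      \<le> sqrt (real (card \<Omega>)) * sqrt (\<Sum>w\<in>\<Omega>. (nrm B (\<lambda>z. oracle_op (F w) st z - oracle_op G st z))\<^sup>2)"
    using fin(1) by (rule cs_sum) (simp add: nrm_nonneg)
  also have "\<dots> \<le> sqrt (real (card \<Omega>)) * sqrt (4 * p * real (card \<Omega>))"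
    using sq by (intro mult_left_mono real_sqrt_le_mono) auto
  also have "\<dots> = 2 * real (card \<Omega>) * sqrt p"
    by (simp add: real_sqrt_mult)
  finally show ?thesis .
qed

lemma expect_bound:
  assumes fin: "finite \<Omega>" "\<Omega> \<noteq> {}" "finite B" and fc: "flipclosed B"
    and init: "nrm B init_state = 1"
    and U: "\<forall>U\<in>set Us. unitary_on B U" and len: "length Us = q + 1"
    and cnt: "\<forall>z\<in>B. real (card {w\<in>\<Omega>. Dif (F w) G z}) \<le> p * real (card \<Omega>)" and p: "0 \<le> p"
  shows "\<bar>measure_pmf.expectation (pmf_of_set \<Omega>) (\<lambda>w. accept_prob B (F w) Us) - accept_prob B G Us\<bar>
     \<le> 4 * real q * sqrt p"
proof -
  define N where "N = real (card \<Omega>)"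
  have N: "N > 0" unfolding N_def using fin by (simp add: card_gt_0_iff)
  define L where "L = qst B G Us init_state"
  have lenL: "length L = q" unfolding L_def qst_length len by simp
  have Lnorm: "\<forall>st\<in>set L. nrm B st = 1" unfolding L_def using qst_norm[OF U fin(3) fc] init by simp
  define h where "h w st = nrm B (\<lambda>z. oracle_op (F w) st z - oracle_op G st z)" for w st
  have each: "\<bar>accept_prob B (F w) Us - accept_prob B G Us\<bar> \<le> 2 * sum_list (map (h w) L)" for w
  proof -
    have "\<bar>accept_prob B (F w) Us - accept_prob B G Us\<bar>
        \<le> 2 * nrm B (\<lambda>z. run B (F w) Us init_state z - run B G Us init_state z)"
      using accept_diff[OF fin(3)] run_norm[OF U fin(3) fc] init by simp
    also have "\<dots> \<le> 2 * (nrm B (\<lambda>z. init_state z - init_state z) + sum_list (map (h w) L))"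
      using hybrid[OF U fin(3) fc, of "F w" init_state G init_state] unfolding h_def L_def by simp
    also have "nrm B (\<lambda>z. init_state z - init_state z) = 0" unfolding nrm_def by (simp add: L2_set_0')
    finally show ?thesis by simp
  qed
  have "measure_pmf.expectation (pmf_of_set \<Omega>) (\<lambda>w. accept_prob B (F w) Us) - accept_prob B G Us
      = (\<Sum>w\<in>\<Omega>. accept_prob B (F w) Us - accept_prob B G Us) / N"
    using fin N unfolding N_def by (simp add: integral_pmf_of_set sum_subtractf field_simps)
  then have "\<bar>measure_pmf.expectation (pmf_of_set \<Omega>) (\<lambda>w. accept_prob B (F w) Us) - accept_prob B G Us\<bar>
      = \<bar>\<Sum>w\<in>\<Omega>. accept_prob B (F w) Us - accept_prob B G Us\<bar> / N" using N by simp
  also have "\<dots> \<le> (\<Sum>w\<in>\<Omega>. \<bar>accept_prob B (F w) Us - accept_prob B G Us\<bar>) / N"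
    using N by (intro divide_right_mono sum_abs) simp
  also have "\<dots> \<le> (\<Sum>w\<in>\<Omega>. 2 * sum_list (map (h w) L)) / N"
    using N by (intro divide_right_mono sum_mono each) simp
  also have "(\<Sum>w\<in>\<Omega>. 2 * sum_list (map (h w) L)) = 2 * sum_list (map (\<lambda>st. \<Sum>w\<in>\<Omega>. h w st) L)"
    by (simp add: sum_distrib_left[symmetric] sum_sum_list)
  also have "sum_list (map (\<lambda>st. \<Sum>w\<in>\<Omega>. h w st) L) \<le> real (length L) * (2 * N * sqrt p)"
  proof (rule sum_list_le, rule ballI)
    fix st assume "st \<in> set L"
    then show "(\<Sum>w\<in>\<Omega>. h w st) \<le> 2 * N * sqrt p"
      using per_state[OF fin(1,3) fc _ cnt p] Lnorm unfolding h_def N_def by blast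
  qed
  then have "2 * sum_list (map (\<lambda>st. \<Sum>w\<in>\<Omega>. h w st) L) / N \<le> 2 * (real (length L) * (2 * N * sqrt p)) / N"
    using N by (intro divide_right_mono) (auto simp: mult_ac)
  also have "\<dots> = 4 * real q * sqrt p" using N lenL by (simp add: field_simps)
  finally show ?thesis by simp
qed

lemma model_bound:
  fixes \<tau> :: "'w \<Rightarrow> (nat \<Rightarrow> bit) list"
  assumes Sj: "\<forall>j\<in>{1..l+1}. z2.subspace (S j) \<and> S j \<subseteq> Z2vecs n"
    and chain: "\<forall>j\<in>{1..l}. S j \<subseteq> S (j + 1)"
    and B0: "S (l+1) \<subseteq> z2.span B0" "finite B0" "card B0 + s \<le> n" "0 < s"
    and \<Omega>: "finite \<Omega>" "\<forall>w\<in>\<Omega>. \<tau> w \<in> indep_tuples n S l s"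
    and inv: "\<And>g. good n (S (l+1)) g \<Longrightarrow> \<exists>\<sigma>. \<sigma> ` \<Omega> \<subseteq> \<Omega> \<and> inj_on \<sigma> \<Omega> \<and> (\<forall>w\<in>\<Omega>. \<tau> (\<sigma> w) = map g (\<tau> w))"
    and x: "x \<in> Z2vecs n" and j: "j \<in> {1..l+1}"
  shows "real (card {w\<in>\<Omega>. (x \<in> Tsp S (\<tau> w) j) \<noteq> (x \<in> S j)}) \<le> 2 / 2 ^ (n - card B0 - s) * real (card \<Omega>)"
proof -
  have Sj2: "\<forall>j\<in>{1..l+1}. z2.subspace (S j) \<and> S j \<subseteq> Z2vecs n" using Sj by blast
  have S': "z2.subspace (S (l+1))" "S (l+1) \<subseteq> Z2vecs n" using Sj by auto
  have Sjj: "z2.subspace (S j)" "S j \<subseteq> S (l + 1)" using Sj j chain_sub[OF chain] by auto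
  let ?D = "{w\<in>\<Omega>. (x \<in> Tsp S (\<tau> w) j) \<noteq> (x \<in> S j)}"
  have nd: "x \<notin> S (l+1) \<and> x \<in> z2.span (S (l+1) \<union> set (\<tau> w))"
    if "w \<in> \<Omega>" "(x \<in> Tsp S (\<tau> w) j) \<noteq> (x \<in> S j)" for w
    using tsp_diff[OF Sjj S'(1) \<Omega>(2)[rule_format, OF that(1)] that(2)] .
  show ?thesis
  proof (cases "x \<in> S (l+1)")
    case True
    then have "?D = {}" using nd by blast
    then have "real (card ?D) = 0" by (simp only: card.empty of_nat_0)
    moreover have "0 \<le> 2 / 2 ^ (n - card B0 - s) * real (card \<Omega>)" by simp
    ultimately show ?thesis by linarith
  next
    case False
    let ?P = "{w\<in>\<Omega>. x \<in> z2.span (S (l+1) \<union> set (\<tau> w))}"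
    have sub: "?D \<subseteq> ?P" using nd by blast
    have tl: "\<forall>w\<in>\<Omega>. set (\<tau> w) \<subseteq> Z2vecs n \<and> length (\<tau> w) = s"
      using \<Omega>(2) unfolding indep_tuples_def mem_Collect_eq by simp
    have cb: "card ?P * 2 ^ (n - 1) \<le> card \<Omega> * 2 ^ (card B0 + s)"
      by (rule count_bound[OF S' B0(1,2) _ \<Omega>(1) tl inv x False]) (use B0 in auto)
    have "card ?D \<le> card ?P" using sub \<Omega>(1) by (intro card_mono) auto
    then have c1: "card ?D * 2 ^ (n - 1) \<le> card \<Omega> * 2 ^ (card B0 + s)"
      using cb by (meson le_trans mult_le_mono1)
    define K where "K = n - card B0 - s"
    have e: "(2::nat) ^ (card B0 + s) * 2 ^ K = 2 * 2 ^ (n - 1)"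
    proof -
      have "(2::nat) ^ (card B0 + s) * 2 ^ K = 2 ^ n" unfolding K_def power_add[symmetric] using B0 by simp
      also have "\<dots> = 2 * 2 ^ (n - 1)" using B0 by (cases n) auto
      finally show ?thesis .
    qed
    have "card ?D * 2 ^ (n - 1) * 2 ^ K \<le> card \<Omega> * 2 ^ (card B0 + s) * 2 ^ K"
      using c1 by simp
    also have "\<dots> = (2 * card \<Omega>) * 2 ^ (n - 1)" using e by (simp add: mult_ac)
    finally have "card ?D * 2 ^ K \<le> 2 * card \<Omega>" by (simp add: mult_ac)
    then have "real (card ?D * 2 ^ K) \<le> real (2 * card \<Omega>)" by (simp only: of_nat_le_iff)
    then have "real (card ?D) * 2 ^ K \<le> 2 * real (card \<Omega>)" by simp
    then show ?thesis unfolding K_def[symmetric] by (simp add: field_simps)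
  qed
qed

theorem mainTheorem4:
  shows "\<exists>C::real. \<forall>(n::nat) (r::nat) (s::nat) (l::nat) (m::nat) (q::nat) (W::nat)
      (S :: nat \<Rightarrow> (nat \<Rightarrow> bit) set) (Us :: (label \<Rightarrow> label \<Rightarrow> complex) list).
    0 < n \<longrightarrow> 0 < r \<longrightarrow> 0 < s \<longrightarrow> 0 < l \<longrightarrow> r + s + l \<le> n \<longrightarrow>
    (\<forall>j\<in>{1..l+1}. z2.subspace (S j) \<and> S j \<subseteq> Z2vecs n \<and> z2.dim (S j) = r + j - 1) \<longrightarrow>
    (\<forall>j\<in>{1..l}. S j \<subseteq> S (j + 1)) \<longrightarrow>
    1 \<le> m \<longrightarrow> 1 \<le> W \<longrightarrow>
    length Us = q + 1 \<longrightarrow> (\<forall>U\<in>set Us. unitary_on (qbasis n m l W) U) \<longrightarrow>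
    \<bar>prob_indep n m l s W S Us - prob_copies n m l s W S Us\<bar>
      \<le> C * (real q * real l * real m * real s) / sqrt (2 ^ (n - r - s - l))"
proof (intro exI[of _ "12::real"] allI impI)
  fix n r s l m q W :: nat and S :: "nat \<Rightarrow> (nat \<Rightarrow> bit) set" and Us :: "(label \<Rightarrow> label \<Rightarrow> complex) list"
  assume n: "0 < n" and r: "0 < r" and s: "0 < s" and l: "0 < l" and rsl: "r + s + l \<le> n"
    and Sj: "\<forall>j\<in>{1..l+1}. z2.subspace (S j) \<and> S j \<subseteq> Z2vecs n \<and> z2.dim (S j) = r + j - 1"
    and chain: "\<forall>j\<in>{1..l}. S j \<subseteq> S (j + 1)" and m: "1 \<le> m" and W: "1 \<le> W"
    and len: "length Us = q + 1" and U: "\<forall>U\<in>set Us. unitary_on (qbasis n m l W) U"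
  define B where "B = qbasis n m l W"
  have finB: "finite B"
  proof -
    have "B \<subseteq> (({..<m} \<times> {1..l+1}) \<times> Z2vecs n \<times> (UNIV :: bool set) \<times> {..<W})"
      unfolding B_def qbasis_def by auto
    moreover have "finite (({..<m} \<times> {1..l+1}) \<times> Z2vecs n \<times> (UNIV :: bool set) \<times> {..<W})"
      using Z2vecs_finite by auto
    ultimately show ?thesis using finite_subset by blast
  qed
  have fcB: "flipclosed B" unfolding B_def qbasis_def flipclosed_def by auto
  have z0: "((0,1), 0, False, 0) \<in> B" using m W unfolding B_def qbasis_def Z2vecs_def by auto
  have initB: "nrm B init_state = 1"
  proof -
    have "(\<Sum>z\<in>B. (cmod (init_state z))\<^sup>2) = (\<Sum>z\<in>B. if z = ((0,1), 0, False, 0) then 1 else 0)"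
      unfolding init_state_def by (intro sum.cong refl) auto
    also have "\<dots> = 1" using z0 finB by simp
    finally show ?thesis unfolding nrm_def L2_set_def by simp
  qed
  have UB: "\<forall>U\<in>set Us. unitary_on B U" using U unfolding B_def .
  have Sj2: "\<forall>j\<in>{1..l+1}. z2.subspace (S j) \<and> S j \<subseteq> Z2vecs n" using Sj by blast
  have S': "z2.subspace (S (l+1))" "S (l+1) \<subseteq> Z2vecs n" "z2.dim (S (l+1)) = r + l" using Sj by auto
  obtain B0 where B0: "B0 \<subseteq> S (l+1)" "z2.independent B0" "S (l+1) \<subseteq> z2.span B0" "card B0 = z2.dim (S (l+1))"
    by (rule z2.basis_exists)
  have finB0: "finite B0" using finite_subset[OF order_trans[OF B0(1) S'(2)] Z2vecs_finite] .
  have cB0: "card B0 = r + l" using B0(4) S'(3) by simp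
  have cB0s: "card B0 + s \<le> n" using cB0 rsl by simp
  define A where "A = indep_tuples n S l s"
  have Ane: "A \<noteq> {}" unfolding A_def by (rule indep_exists[of S l B0 s n, OF S'(1) B0(3) finB0 cB0s])
  have finA: "finite A"
  proof -
    have "A \<subseteq> {vs. set vs \<subseteq> Z2vecs n \<and> length vs = s}" unfolding A_def indep_tuples_def by auto
    then show ?thesis using finite_lists_length_eq[OF Z2vecs_finite] finite_subset by blast
  qed
  define p :: real where "p = 2 / 2 ^ (n - card B0 - s)"
  have p0: "0 \<le> p" unfolding p_def by simp
  define G where "G = (\<lambda>(i::nat, j::nat) x. x \<in> S j)"
  have zB: "\<exists>i j x b w. z = ((i, j), x, b, w) \<and> i < m \<and> j \<in> {1..l+1} \<and> x \<in> Z2vecs n" if "z \<in> B" for z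
    using that unfolding B_def qbasis_def by auto
  define Fb where "Fb = (\<lambda>vs. (\<lambda>(i::nat, j::nat) x. x \<in> Tsp S vs j))"
  have cntb: "\<forall>z\<in>B. real (card {w\<in>A. Dif (Fb w) G z}) \<le> p * real (card A)"
  proof
    fix z assume "z \<in> B"
    then obtain i j x b w where z: "z = ((i, j), x, b, w)" "i < m" "j \<in> {1..l+1}" "x \<in> Z2vecs n"
      using zB by blast
    have eq: "{w\<in>A. Dif (Fb w) G z} = {w\<in>A. (x \<in> Tsp S ((\<lambda>v. v) w) j) \<noteq> (x \<in> S j)}"
      unfolding z Dif_def Fb_def G_def by simp
    have inv: "\<exists>\<sigma>. \<sigma> ` A \<subseteq> A \<and> inj_on \<sigma> A \<and> (\<forall>w\<in>A. (\<lambda>v. v) (\<sigma> w) = map g ((\<lambda>v. v) w))"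
      if g: "good n (S (l+1)) g" for g
    proof (intro exI[of _ "map g"] conjI)
      show "map g ` A \<subseteq> A" unfolding A_def using good_indep[of n S l g, OF g] by blast
      show "inj_on (map g) A" using good_inj[OF g] by (simp add: inj_on_def inj_def)
    qed simp
    have "real (card {w\<in>A. (x \<in> Tsp S ((\<lambda>v. v) w) j) \<noteq> (x \<in> S j)}) \<le> p * real (card A)"
      unfolding p_def using model_bound[OF Sj2 chain B0(3) finB0 cB0s s finA _ inv z(4) z(3)]
      unfolding A_def by (simp add: mult_ac)
    then show "real (card {w\<in>A. Dif (Fb w) G z}) \<le> p * real (card A)" unfolding eq .
  qed
  define Om where "Om = {vss. length vss = m \<and> set vss \<subseteq> A}"
  have finOm: "finite Om" unfolding Om_def using finite_lists_length_eq[OF finA] by (simp add: conj_commute)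
  obtain a0 where a0: "a0 \<in> A" using Ane by blast
  have Omne: "Om \<noteq> {}"
  proof -
    have "replicate m a0 \<in> Om" unfolding Om_def using a0 by (auto simp: set_replicate_conv_if)
    then show ?thesis by blast
  qed
  define Fa where "Fa = (\<lambda>vss. (\<lambda>(i::nat, j::nat) x. x \<in> Tsp S (vss ! i) j))"
  have cnta: "\<forall>z\<in>B. real (card {w\<in>Om. Dif (Fa w) G z}) \<le> p * real (card Om)"
  proof
    fix z assume "z \<in> B"
    then obtain i j x b w where z: "z = ((i, j), x, b, w)" "i < m" "j \<in> {1..l+1}" "x \<in> Z2vecs n"
      using zB by blast
    have eq: "{w\<in>Om. Dif (Fa w) G z} = {w\<in>Om. (x \<in> Tsp S ((\<lambda>v. v ! i) w) j) \<noteq> (x \<in> S j)}"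
      unfolding z Dif_def Fa_def G_def by simp
    have mem: "\<forall>w\<in>Om. (\<lambda>v. v ! i) w \<in> indep_tuples n S l s"
    proof
      fix vss assume "vss \<in> Om"
      then have "length vss = m" "set vss \<subseteq> A" unfolding Om_def by auto
      then show "(\<lambda>v. v ! i) vss \<in> indep_tuples n S l s" using z(2) nth_mem unfolding A_def by blast
    qed
    have inv: "\<exists>\<sigma>. \<sigma> ` Om \<subseteq> Om \<and> inj_on \<sigma> Om \<and> (\<forall>w\<in>Om. (\<lambda>v. v ! i) (\<sigma> w) = map g ((\<lambda>v. v ! i) w))"
      if g: "good n (S (l+1)) g" for g
    proof (intro exI[of _ "map (map g)"] conjI)
      show "map (map g) ` Om \<subseteq> Om"
      proof
        fix y assume "y \<in> map (map g) ` Om"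
        then obtain vss where v: "vss \<in> Om" "y = map (map g) vss" by blast
        have "set y = map g ` set vss" using v(2) by simp
        moreover have "map g ` A \<subseteq> A" unfolding A_def using good_indep[of n S l g, OF g] by blast
        ultimately have "set y \<subseteq> A" using v(1) unfolding Om_def by blast
        moreover have "length y = m" using v unfolding Om_def by simp
        ultimately show "y \<in> Om" unfolding Om_def by blast
      qed
      have "inj (map g)" using good_inj[OF g] by (simp add: inj_on_def inj_def)
      then have "inj (map (map g))" by (simp add: inj_on_def inj_def)
      then show "inj_on (map (map g)) Om" by (simp add: inj_on_def inj_def)
      show "\<forall>w\<in>Om. (\<lambda>v. v ! i) (map (map g) w) = map g ((\<lambda>v. v ! i) w)"
        using z(2) unfolding Om_def by simp
    qed
    have "real (card {w\<in>Om. (x \<in> Tsp S ((\<lambda>v. v ! i) w) j) \<noteq> (x \<in> S j)}) \<le> p * real (card Om)"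
      unfolding p_def using model_bound[OF Sj2 chain B0(3) finB0 cB0s s finOm mem inv z(4) z(3)]
      by (simp add: mult_ac)
    then show "real (card {w\<in>Om. Dif (Fa w) G z}) \<le> p * real (card Om)" unfolding eq .
  qed
  have Ea: "\<bar>prob_indep n m l s W S Us - accept_prob B G Us\<bar> \<le> 4 * real q * sqrt p"
  proof -
    have "prob_indep n m l s W S Us = measure_pmf.expectation (pmf_of_set Om) (\<lambda>w. accept_prob B (Fa w) Us)"
      unfolding prob_indep_def Om_def A_def B_def Fa_def ..
    then show ?thesis using expect_bound[OF finOm Omne finB fcB initB UB len cnta p0] by simp
  qed
  have Eb: "\<bar>prob_copies n m l s W S Us - accept_prob B G Us\<bar> \<le> 4 * real q * sqrt p"
  proof -
    have "prob_copies n m l s W S Us = measure_pmf.expectation (pmf_of_set A) (\<lambda>w. accept_prob B (Fb w) Us)"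
      unfolding prob_copies_def A_def B_def Fb_def ..
    then show ?thesis using expect_bound[OF finA Ane finB fcB initB UB len cntb p0] by simp
  qed
  define K where "K = n - r - s - l"
  have pK: "p = 2 / 2 ^ K" unfolding p_def K_def cB0 by (simp add: algebra_simps)
  have sq2: "sqrt 2 \<le> (3/2 :: real)"
    by (rule real_le_lsqrt) (auto simp: power2_eq_square)
  have sK: "0 < sqrt ((2::real) ^ K)" by simp
  have sqp: "sqrt p = sqrt 2 / sqrt (2 ^ K)" unfolding pK by (simp add: real_sqrt_divide)
  have "\<bar>prob_indep n m l s W S Us - prob_copies n m l s W S Us\<bar> \<le> 8 * real q * sqrt p"
    using Ea Eb by linarith
  also have "\<dots> = 8 * real q * sqrt 2 / sqrt (2 ^ K)" unfolding sqp by simp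
  also have "\<dots> \<le> 12 * (real q * real l * real m * real s) / sqrt (2 ^ K)"
  proof (rule divide_right_mono)
    have "real q * 1 \<le> real q * (real l * real m * real s)"
    proof (rule mult_left_mono)
      have "1 \<le> real l" "1 \<le> real m" "1 \<le> real s" using l m s by auto
      then show "1 \<le> real l * real m * real s"
        by (metis mult_le_cancel_left1 mult_mono' mult_nonneg_nonneg order_trans zero_le_one mult_1)
    qed simp
    moreover have "real q * (8 * sqrt 2) \<le> real q * 12" by (rule mult_left_mono) (use sq2 in auto)
    then have "8 * real q * sqrt 2 \<le> 12 * real q" by (simp add: mult_ac)
    ultimately show "8 * real q * sqrt 2 \<le> 12 * (real q * real l * real m * real s)" by (simp add: mult_ac)
  qed simp
  finally show "\<bar>prob_indep n m l s W S Us - prob_copies n m l s W S Us\<bar>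
      \<le> 12 * (real q * real l * real m * real s) / sqrt (2 ^ (n - r - s - l))" unfolding K_def .
qed
end
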